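(* Let $e_X:P\to X$ be a meet-extension with $X$ a complete lattice, let $Q$ be a complete lattice, and let $f:P\to Q$ be an order-preserving map. Then $f$ is an $X$-morphism if and only if $f$ is $e_X$-continuous.
   Context: For $q$ in a poset, $q^\uparrow=\{q'\ge q\}$; for $S\subseteq P$, $S^\uparrow=\{p\in P:p\ge s\text{ for some }s\in S\}$; $e^{-1}(Z)=\{p:e(p)\in Z\}$. A meet-extension is an order-embedding $e:P\to X$ with $x=\bigwedge e[e^{-1}(x^\uparrow)]$ for all $x\in X$. An order-preserving $f:P\to Q$ is an $X$-morphism if for every $q\in Q$ there is $x\in X$ with $f^{-1}(q^\uparrow)=e_X^{-1}(x^\uparrow)$. For a cardinal $\alpha$, $f$ is $(\alpha,e_X)$-continuous if for all $q\in Q$ and all $S\subseteq f^{-1}(q^\uparrow)$ with $|S|<\alpha$ there are $q_S\in Q$ and $x_S\in X$ with (1) $\bigwedge f[S]=q_S=\bigwedge f[e_X^{-1}(x_S^\uparrow)]$ (both meets existing in $Q$) and (2) $S^\uparrow\subseteq e_X^{-1}(x_S^\uparrow)$. $f$ is $e_X$-continuous if it is $(\alpha,e_X)$-continuous for every cardinal $\alpha$. *)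

theory Defs
  imports Main
begin

definition up :: "'a::order \<Rightarrow> 'a set" where
  "up q = {q'. q \<le> q'}"

definition up_set :: "'a::order set \<Rightarrow> 'a set" where
  "up_set S = {p. \<exists>s\<in>S. s \<le> p}"

definition order_embedding :: "('p::order \<Rightarrow> 'x::order) \<Rightarrow> bool" where
  "order_embedding e \<longleftrightarrow> (\<forall>p p'. e p \<le> e p' \<longleftrightarrow> p \<le> p')"

definition meet_extension :: "('p::order \<Rightarrow> 'x::complete_lattice) \<Rightarrow> bool" where
  "meet_extension e \<longleftrightarrow> order_embedding e \<and>
     (\<forall>x. x = Inf (e ` (e -` up x)))"

definition X_morphism :: "('p::order \<Rightarrow> 'x::order) \<Rightarrow> ('p \<Rightarrow> 'q::order) \<Rightarrow> bool" where
  "X_morphism e f \<longleftrightarrow> (\<forall>q. \<exists>x. f -` up q = e -` up x)"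

text \<open>(alpha,e)-continuity, for a cardinal alpha given as a cardinal order relation r.
  Q is a complete lattice, so all meets exist.\<close>
definition alpha_continuous ::
  "'c rel \<Rightarrow> ('p::order \<Rightarrow> 'x::order) \<Rightarrow> ('p \<Rightarrow> 'q::complete_lattice) \<Rightarrow> bool" where
  "alpha_continuous r e f \<longleftrightarrow>
     (\<forall>q. \<forall>S. S \<subseteq> f -` up q \<and> ordLess2 (card_of S) r \<longrightarrow>
        (\<exists>qS xS. Inf (f ` S) = qS \<and> qS = Inf (f ` (e -` up xS))
                 \<and> up_set S \<subseteq> e -` up xS))"

text \<open>Cardinals are taken
  on the carrier 'p set; these include cardinals exceeding |P|, so every subset of P
  is covered (cardinals above that give no new conditions).\<close>
definition e_continuous :: "('p::order \<Rightarrow> 'x::order) \<Rightarrow> ('p \<Rightarrow> 'q::complete_lattice) \<Rightarrow> bool" where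
  "e_continuous e f \<longleftrightarrow> (\<forall>r :: 'p set rel. Card_order r \<longrightarrow> alpha_continuous r e f)"

end

theory Submission
  imports Defs
begin

theorem proposition7p2:
  fixes e :: "'p::order \<Rightarrow> 'x::complete_lattice"
    and f :: "'p \<Rightarrow> 'q::complete_lattice"
  assumes "meet_extension e"
    and "mono f"
  shows "X_morphism e f \<longleftrightarrow> e_continuous e f"
proof
  assume H: "X_morphism e f"
  show "e_continuous e f"
    unfolding e_continuous_def alpha_continuous_def
  proof (intro allI impI)
    fix r :: "'p set rel" and q S
    let ?q' = "Inf (f ` S)"
    obtain x where x: "f -` up ?q' = e -` up x"
      using H unfolding X_morphism_def by blast
    have S1: "S \<subseteq> f -` up ?q'" by (auto simp: up_def Inf_lower)
    have U: "up_set S \<subseteq> e -` up x"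
    proof
      fix p assume "p \<in> up_set S"
      then obtain s where "s \<in> S" "s \<le> p" by (auto simp: up_set_def)
      then have "?q' \<le> f p" using assms(2) by (meson Inf_lower image_eqI monoD order_trans)
      then show "p \<in> e -` up x" using x by (auto simp: up_def)
    qed
    have "Inf (f ` (e -` up x)) = ?q'"
    proof (rule antisym)
      show "Inf (f ` (e -` up x)) \<le> ?q'"
        using S1 x by (intro Inf_superset_mono) auto
      show "?q' \<le> Inf (f ` (e -` up x))"
        using x[symmetric] by (auto intro!: Inf_greatest simp: up_def)
    qed
    then show "\<exists>qS xS. Inf (f ` S) = qS \<and> qS = Inf (f ` (e -` up xS)) \<and> up_set S \<subseteq> e -` up xS"
      using U by metis
  qed
next
  assume H: "e_continuous e f"
  show "X_morphism e f"
    unfolding X_morphism_def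
  proof
    fix q
    let ?S = "f -` up q"
    have c: "Card_order (card_of (Pow (UNIV :: 'p set)))" by (rule card_of_Card_order)
    have "(card_of ?S, card_of (UNIV :: 'p set)) \<in> ordLeq" by (rule card_of_mono1) simp
    then have lt: "ordLess2 (card_of ?S) (card_of (Pow (UNIV :: 'p set)))"
      using card_of_Pow ordLeq_ordLess_trans by blast
    obtain xS where x1: "Inf (f ` ?S) = Inf (f ` (e -` up xS))"
      and x2: "up_set ?S \<subseteq> e -` up xS"
      using H c lt unfolding e_continuous_def alpha_continuous_def by blast
    have "?S = e -` up xS"
    proof
      show "?S \<subseteq> e -` up xS" using x2 by (auto simp: up_set_def)
      show "e -` up xS \<subseteq> ?S"
      proof
        fix p assume "p \<in> e -` up xS"
        then have "Inf (f ` (e -` up xS)) \<le> f p" by (simp add: Inf_lower)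
        moreover have "q \<le> Inf (f ` ?S)" by (auto intro!: Inf_greatest simp: up_def)
        ultimately show "p \<in> ?S" using x1 by (auto simp: up_def)
      qed
    qed
    then show "\<exists>x. ?S = e -` up x" by blast
  qed
qed

end
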